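(* Let $q\in\mathbb{N}$ be odd and square-free. Then for any fixed $\varepsilon>0$, \[\widehat{B}_3(q)\ll_{\varepsilon}q^{\varepsilon}\,\widehat{B}_2(q),\] the implied constant depending only on $\varepsilon$.
   Context: For an integral quadratic form $Q$ in $n$ variables, $\widehat{m}(Q;q):=\min\{\|\mathbf{x}\|:\ \mathbf{x}\in\mathbb{Z}^n\setminus\{\mathbf{0}\},\ \exists t\in\mathbb{Z},\ Q(\mathbf{x})\equiv t^2\pmod q\}$, with $\|\cdot\|$ the Euclidean norm, and $\widehat{B}_n(q):=\max_Q\widehat{m}(Q;q)$, the maximum over all integral quadratic forms $Q$ in $n$ variables with $\gcd(\det(Q),q)=1$. Since $q$ is odd, $Q$ is represented modulo $q$ by a symmetric integer matrix $M$ with $Q(\mathbf{x})\equiv\mathbf{x}^TM\mathbf{x}\pmod q$, and $\det(Q)$ means $\det(M)$. *)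

theory Defs
  imports "HOL-Analysis.Analysis" "HOL-Number_Theory.Number_Theory" "HOL-Computational_Algebra.Squarefree"
begin

text \<open>A quadratic form in n variables (n given by the finite index type 'n) modulo an odd q
  is represented by a symmetric integer matrix M, with Q(x) = x^T M x.\<close>

definition qform :: "int^'n^'n \<Rightarrow> int^'n \<Rightarrow> int" where
  "qform M x = (\<Sum>i\<in>UNIV. \<Sum>j\<in>UNIV. M$i$j * x$i * x$j)"

definition enorm :: "int^'n \<Rightarrow> real" where
  "enorm x = sqrt (\<Sum>i\<in>UNIV. (real_of_int (x$i))^2)"

definition mhat :: "int^'n^'n \<Rightarrow> nat \<Rightarrow> real" where
  "mhat M q = Inf {enorm x | x. x \<noteq> 0 \<and> (\<exists>t::int. [qform M x = t^2] (mod int q))}"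

definition Bhat :: "'n::finite itself \<Rightarrow> nat \<Rightarrow> real" where
  "Bhat _ q = Sup {mhat (M::int^'n^'n) q | M. transpose M = M \<and> coprime (det M) (int q)}"

end

theory Submission
  imports Defs "HOL-Real_Asymp.Real_Asymp"
begin


definition cA :: "int^3^3 \<Rightarrow> int \<Rightarrow> int" where
  "cA M a = M$1$1*a^2 - 2*M$1$2*a + M$2$2"
definition cB :: "int^3^3 \<Rightarrow> int \<Rightarrow> int" where
  "cB M a = M$1$1*a^4 - M$1$2*a^3 - M$1$3*a + M$2$3"
definition cC :: "int^3^3 \<Rightarrow> int \<Rightarrow> int" where
  "cC M a = M$1$1*a^6 - 2*M$1$3*a^3 + M$3$3"
definition M2of :: "int^3^3 \<Rightarrow> int \<Rightarrow> int^2^2" where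
  "M2of M a = vector [vector [cA M a, cB M a], vector [cB M a, cC M a]]"
definition xvec :: "int \<Rightarrow> int \<Rightarrow> int^2 \<Rightarrow> int^3" where
  "xvec s a y = vector [s*(y$1*a + y$2*a^3), -s*y$1, -s*y$2]"
definition Dp :: "int^3^3 \<Rightarrow> int poly" where
  "Dp M = [: M$2$2*M$3$3 - (M$2$3)^2, 2*(M$1$3*M$2$3 - M$1$2*M$3$3), M$1$1*M$3$3 - (M$1$3)^2,
            2*(M$1$2*M$2$3 - M$1$3*M$2$2), 2*(M$1$2*M$1$3 - M$1$1*M$2$3), 0, M$1$1*M$2$2 - (M$1$2)^2 :]"

lemma sym3: assumes "transpose M = M" shows "M$2$1 = M$1$2" "M$3$1 = M$1$3" "M$3$2 = M$2$3"
  using assms unfolding transpose_def by (metis vec_lambda_beta)+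

lemma qform_x: assumes "transpose M = M"
  shows "qform M (xvec s a y) = s^2 * qform (M2of M a) y"
proof -
  obtain m11 m12 m13 m22 m23 m33 y1 y2 where e: "M$1$1 = m11" "M$1$2 = m12" "M$1$3 = m13"
    "M$2$2 = m22" "M$2$3 = m23" "M$3$3 = m33" "y$1 = y1" "y$2 = y2" by blast
  show ?thesis using sym3[OF assms]
  by (simp add: qform_def sum_3 sum_2 xvec_def M2of_def cA_def cB_def cC_def e algebra_simps eval_nat_numeral)
qed

lemma det_M2: assumes "transpose M = M"
  shows "det (M2of M a) = poly (Dp M) a"
proof -
  obtain m11 m12 m13 m22 m23 m33 where e: "M$1$1 = m11" "M$1$2 = m12" "M$1$3 = m13"
    "M$2$2 = m22" "M$2$3 = m23" "M$3$3 = m33" by blast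
  show ?thesis
  by (simp add: det_2 M2of_def cA_def cB_def cC_def Dp_def e algebra_simps eval_nat_numeral)
qed

lemma det_coeffs: assumes "transpose M = M"
  shows "2 * det M = 2*M$1$1*Polynomial.coeff (Dp M) 0 + M$1$2*Polynomial.coeff (Dp M) 1 + M$1$3 * Polynomial.coeff (Dp M) 3"
proof -
  obtain m11 m12 m13 m22 m23 m33 where e: "M$1$1 = m11" "M$1$2 = m12" "M$1$3 = m13"
    "M$2$2 = m22" "M$2$3 = m23" "M$3$3 = m33" by blast
  show ?thesis using sym3[OF assms]
  by (simp add: det_3 Dp_def e algebra_simps eval_nat_numeral)
qed

lemma deg_Dp: "degree (Dp M) \<le> 6"
  unfolding Dp_def by (rule order_trans[OF degree_pCons_le], simp)+ 


lemma roots_mod_p: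
  fixes f :: "int poly" and p :: int
  assumes "prime p" "\<not>(\<forall>i. p dvd Polynomial.coeff f i)" "finite A"
    "\<forall>a\<in>A. \<forall>b\<in>A. [a = b] (mod p) \<longrightarrow> a = b"
  shows "card {a\<in>A. p dvd poly f a} \<le> degree f"
  using assms(2)
proof (induction "degree f" arbitrary: f rule: less_induct)
  case less
  show ?case
  proof (cases "{a\<in>A. p dvd poly f a} = {}")
    case True then show ?thesis by (simp only: card.empty)
  next
    case False
    then obtain a0 where a0: "a0 \<in> A" "p dvd poly f a0" by blast
    define g where "g = synthetic_div f a0"
    have feq: "f = [:-a0, 1:] * g + [:poly f a0:]"
      unfolding g_def by (rule synthetic_div_correct'[symmetric])
    have ng: "\<not>(\<forall>i. p dvd Polynomial.coeff g i)"
    proof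
      assume "\<forall>i. p dvd Polynomial.coeff g i"
      hence "[:p:] dvd g" by (subst const_poly_dvd_iff) blast
      moreover have "[:p:] dvd [:poly f a0:]" using a0 by (simp add: const_poly_dvd_iff coeff_pCons split: nat.splits)
      ultimately have "[:p:] dvd [:-a0, 1:] * g + [:poly f a0:]" by (intro dvd_add dvd_mult)
      hence "[:p:] dvd f" using feq by metis
      hence "\<forall>i. p dvd Polynomial.coeff f i" by (subst (asm) const_poly_dvd_iff) blast
      with less.prems show False by blast
    qed
    have degpos: "degree f > 0"
    proof (rule ccontr)
      assume "\<not> degree f > 0"
      hence "degree f = 0" by simp
      then obtain c where c: "f = [:c:]" by (elim degree_eq_zeroE)
      hence "\<forall>i. p dvd Polynomial.coeff f i" using a0 by (auto simp: coeff_pCons split: nat.splits)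
      with less.prems show False by blast
    qed
    have dg: "degree g < degree f" unfolding g_def using degpos by (simp add: degree_synthetic_div)
    have IH: "card {a\<in>A. p dvd poly g a} \<le> degree g" using less.hyps[OF dg ng] .
    have sub: "{a\<in>A. p dvd poly f a} \<subseteq> insert a0 {a\<in>A. p dvd poly g a}"
    proof
      fix a assume a: "a \<in> {a\<in>A. p dvd poly f a}"
      have e: "poly f a - poly f a0 = (a - a0) * poly g a" by (subst (1) feq) (simp add: algebra_simps)
      have d: "p dvd poly f a - poly f a0" using a a0(2) by (intro dvd_diff) auto
      have "p dvd (a - a0) * poly g a" using d unfolding e .
      hence "p dvd (a - a0) \<or> p dvd poly g a" using assms(1) prime_dvd_mult_iff by blast
      thus "a \<in> insert a0 {a\<in>A. p dvd poly g a}"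
      proof
        assume "p dvd a - a0"
        hence "[a = a0] (mod p)" by (simp add: cong_iff_dvd_diff)
        with assms(4) a a0 show ?thesis by auto
      qed (use a in auto)
    qed
    have "card {a\<in>A. p dvd poly f a} \<le> card (insert a0 {a\<in>A. p dvd poly g a})"
      by (rule card_mono) (use assms(3) sub in auto)
    also have "\<dots> \<le> Suc (card {a\<in>A. p dvd poly g a})" by (rule card_insert_le_m1) auto
    also have "\<dots> \<le> degree f" using IH dg by simp
    finally show ?thesis .
  qed
qed


lemma prod_primes_dvd:
  fixes n :: nat
  assumes "finite A" "\<forall>p\<in>A. prime p \<and> p dvd n"
  shows "\<Prod>A dvd n"
  using assms
proof (induction A rule: finite_induct)
  case empty then show ?case by simp
next
  case (insert p A)
  have "coprime p (\<Prod>A)"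
  proof (rule prod_coprime_right)
    fix i assume "i \<in> A"
    with insert show "coprime p i" by (intro primes_coprime) auto
  qed
  moreover have "p dvd n" "\<Prod>A dvd n" using insert by auto
  ultimately show ?case using insert(1,2) by (simp add: divides_mult)
qed

lemma central_binom_le: "(2*m+1) choose m \<le> 4^m"
proof -
  have sym: "(2*m+1) choose (m+1) = (2*m+1) choose m"
    using binomial_symmetric[of m "2*m+1"] by simp
  have "2 * ((2*m+1) choose m) = (\<Sum>k\<in>{m, m+1}. (2*m+1) choose k)" using sym by simp
  also have "\<dots> \<le> (\<Sum>k\<le>2*m+1. (2*m+1) choose k)" by (rule sum_mono2) auto
  also have "\<dots> = 2^(2*m+1)" by (rule choose_row_sum)
  also have "\<dots> = 2 * 4^m" by (simp add: power_mult power_add)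
  finally show ?thesis by simp
qed

lemma primorial_le: "\<Prod>{p::nat. prime p \<and> p \<le> n} \<le> 4^n"
proof (induction n rule: less_induct)
  case (less n)
  show ?case
  proof (cases "n \<le> 2")
    case True
    show ?thesis
    proof (cases "n = 0")
      case True
      hence e: "{p::nat. prime p \<and> p \<le> n} = {}" by auto
      show ?thesis unfolding e by simp
    next
      case False
      have "p = 2" if "prime p" "p \<le> n" for p::nat
        using prime_ge_2_nat[OF that(1)] that(2) \<open>n \<le> 2\<close> by linarith
      hence "{p::nat. prime p \<and> p \<le> n} \<subseteq> {2}" by blast
      hence "\<Prod>{p::nat. prime p \<and> p \<le> n} dvd \<Prod>{2::nat}" by (intro prod_dvd_prod_subset) auto
      hence "\<Prod>{p::nat. prime p \<and> p \<le> n} \<le> 2" by (simp add: dvd_imp_le)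
      also have "(2::nat) \<le> 4^1" by simp
      also have "(4::nat)^1 \<le> 4^n" by (rule power_increasing) (use False in auto)
      finally show ?thesis .
    qed
  next
    case False
    show ?thesis
    proof (cases "even n")
      case True
      have "p \<le> n - 1" if "prime p" "p \<le> n" for p
        using True False prime_odd_nat[of n] that by (cases "p = n") auto
      hence "{p::nat. prime p \<and> p \<le> n} = {p. prime p \<and> p \<le> n - 1}" by auto
      hence "\<Prod>{p::nat. prime p \<and> p \<le> n} \<le> 4^(n-1)" using less[of "n-1"] False by simp
      also have "\<dots> \<le> 4^n" by (intro power_increasing) auto
      finally show ?thesis .
    next
      case odd: False
      then obtain m where n: "n = 2*m+1" using oddE by blast
      with False have m1: "m \<ge> 1" by simp
      define A where "A = {p::nat. prime p \<and> p \<le> m+1}"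
      define B where "B = {p::nat. prime p \<and> m+1 < p \<and> p \<le> n}"
      have fA: "finite A" "finite B" unfolding A_def B_def by auto
      have un: "{p::nat. prime p \<and> p \<le> n} = A \<union> B" "A \<inter> B = {}" unfolding A_def B_def n by auto
      have pA: "\<Prod>A \<le> 4^(m+1)" unfolding A_def using less[of "m+1"] n m1 by simp
      have Bd: "\<Prod>B dvd (2*m+1) choose m"
      proof (rule prod_primes_dvd[OF fA(2)], safe)
        fix p assume "p \<in> B"
        hence p: "prime p" "m+1 < p" "p \<le> 2*m+1" unfolding B_def n by auto
        have "fact m * fact (2*m+1-m) * ((2*m+1) choose m) = (fact (2*m+1) :: nat)"
          by (rule binomial_fact_lemma) simp
        moreover have "p dvd fact (2*m+1)" using prime_dvd_fact_iff[OF p(1), of "2*m+1"] p(3) by blast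
        ultimately have "p dvd fact m * fact (m+1) * ((2*m+1) choose m)" by simp
        moreover have "\<not> p dvd fact m" using prime_dvd_fact_iff[OF p(1), of "m"] p(2) by linarith
        moreover have "\<not> p dvd fact (m+1)" using prime_dvd_fact_iff[OF p(1), of "m+1"] p(2) by linarith
        ultimately show "p dvd (2*m+1) choose m" using p(1) by (simp add: prime_dvd_mult_iff)
        show "prime p" by fact
      qed
      have "\<Prod>B \<le> (2*m+1) choose m" using Bd by (rule dvd_imp_le) simp
      also have "\<dots> \<le> 4^m" by (rule central_binom_le)
      finally have pB: "\<Prod>B \<le> 4^m" .
      have "\<Prod>{p::nat. prime p \<and> p \<le> n} = \<Prod>A * \<Prod>B" unfolding un(1) by (rule prod.union_disjoint) (use fA un in auto)
      also have "\<dots> \<le> 4^(m+1) * 4^m" using pA pB by (rule mult_mono) auto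
      also have "\<dots> = 4^n" unfolding n by (simp add: power_add[symmetric])
      finally show ?thesis .
    qed
  qed
qed


lemma asym_bound:
  fixes \<epsilon> :: real assumes e: "\<epsilon> > 0"
  shows "\<exists>C>0. \<forall>n::nat. n \<ge> 2 \<longrightarrow> 4 * 4^n * real n ^ 3 \<le> C * real n powr (\<epsilon>*(real n - 1)/6)"
proof -
  define f where "f = (\<lambda>x::real. 4 * 4 powr x * x^3 / x powr (\<epsilon>*(x-1)/6))"
  have lim: "(f \<longlongrightarrow> 0) at_top" unfolding f_def using e by real_asymp
  have "filterlim (\<lambda>n::nat. real n) at_top sequentially" by (rule filterlim_real_sequentially)
  hence "((\<lambda>n. f (real n)) \<longlongrightarrow> 0) sequentially" using lim by (rule filterlim_compose[rotated])
  hence "eventually (\<lambda>n. f (real n) < 1) sequentially" by (rule order_tendstoD) simp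
  then obtain N0 where N0: "\<And>n. n \<ge> N0 \<Longrightarrow> f (real n) < 1" by (auto simp: eventually_sequentially)
  define C where "C = 1 + (\<Sum>n<N0. 4 * 4^n * real n ^ 3)"
  have Cpos: "C \<ge> 1" unfolding C_def by (intro add_increasing2 sum_nonneg) auto
  show ?thesis
  proof (intro exI[of _ C] conjI allI impI)
    show "C > 0" using Cpos by simp
    fix n :: nat assume n2: "n \<ge> 2"
    have pw1: "real n powr (\<epsilon>*(real n - 1)/6) \<ge> 1"
      using n2 e by (intro ge_one_powr_ge_zero) auto
    show "4 * 4^n * real n ^ 3 \<le> C * real n powr (\<epsilon>*(real n - 1)/6)"
    proof (cases "n < N0")
      case True
      have "4 * 4^n * real n ^ 3 \<le> (\<Sum>n<N0. 4 * 4^n * real n ^ 3)"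
        using True by (intro member_le_sum) auto
      also have "\<dots> \<le> C" unfolding C_def by simp
      also have "\<dots> \<le> C * real n powr (\<epsilon>*(real n - 1)/6)" using pw1 Cpos by simp
      finally show ?thesis .
    next
      case False
      hence "f (real n) < 1" using N0 by simp
      moreover have "real n powr (\<epsilon>*(real n - 1)/6) > 0" using n2 by simp
      ultimately have "4 * 4 powr (real n) * real n ^ 3 < real n powr (\<epsilon>*(real n - 1)/6)"
        unfolding f_def by (simp add: divide_less_eq)
      moreover have "4 powr (real n) = (4::real)^n" by (simp add: powr_realpow)
      ultimately have "4 * 4^n * real n ^ 3 \<le> 1 * real n powr (\<epsilon>*(real n - 1)/6)" by simp
      also have "\<dots> \<le> C * real n powr (\<epsilon>*(real n - 1)/6)" using Cpos pw1 by (intro mult_right_mono) auto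
      finally show ?thesis .
    qed
  qed
qed


lemma qform_axis: "qform M (axis i c) = M$i$i * c * c"
proof -
  have in1: "(\<Sum>j\<in>UNIV. M$k$j * axis i c $ k * axis i c $ j) = (if k = i then M$i$i * c * c else 0)" for k
  proof -
    have "(\<Sum>j\<in>UNIV. M$k$j * axis i c $ k * axis i c $ j) = (\<Sum>j\<in>UNIV. if j = i then M$k$i * axis i c $ k * c else 0)"
      by (rule sum.cong) (auto simp: axis_def)
    also have "\<dots> = M$k$i * axis i c $ k * c" by simp
    finally show ?thesis by (auto simp: axis_def)
  qed
  show ?thesis unfolding qform_def in1 by simp
qed

lemma enorm_axis: assumes "c \<ge> 0" shows "enorm (axis i c) = real_of_int c"
proof -
  have "(\<Sum>k\<in>UNIV. (real_of_int (axis i c $ k))^2) = (\<Sum>k\<in>UNIV. if k = i then (real_of_int c)^2 else 0)"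
    by (rule sum.cong) (auto simp: axis_def)
  also have "\<dots> = (real_of_int c)^2" by simp
  finally show ?thesis unfolding enorm_def using assms by simp
qed

lemma enorm_nonneg: "enorm x \<ge> 0"
  unfolding enorm_def by (intro real_sqrt_ge_zero sum_nonneg) auto

lemma mhat_facts:
  fixes M :: "int^'n^'n" and q :: nat
  assumes "q > 0"
  shows "{enorm x | x::int^'n. x \<noteq> 0 \<and> (\<exists>t::int. [qform M x = t^2] (mod int q))} \<noteq> {}"
    and "mhat M q \<le> real q" and "mhat M q \<ge> 0"
proof -
  define X where "X = {enorm x | x::int^'n. x \<noteq> 0 \<and> (\<exists>t::int. [qform M x = t^2] (mod int q))}"
  define x where "x = axis (undefined::'n) (int q)"
  have "x \<noteq> 0" unfolding x_def using assms by (simp add: axis_eq_0_iff)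
  moreover have "[qform M x = 0^2] (mod int q)" unfolding x_def qform_axis
    by (simp add: cong_0_iff)
  ultimately have xin: "enorm x \<in> X" unfolding X_def by blast
  have ex: "enorm x = real q" unfolding x_def by (subst enorm_axis) auto
  have bdd: "bdd_below X" unfolding X_def by (rule bdd_belowI[of _ 0]) (auto simp: enorm_nonneg)
  show "X \<noteq> {}" using xin by blast
  show "mhat M q \<le> real q" unfolding mhat_def X_def[symmetric] using cInf_lower[OF xin bdd] ex by simp
  show "mhat M q \<ge> 0" unfolding mhat_def X_def[symmetric]
    by (rule cInf_greatest) (use xin in auto, auto simp: X_def enorm_nonneg)
qed

definition gcnt :: "nat \<Rightarrow> nat \<Rightarrow> nat" where "gcnt q N = card {p \<in> prime_factors q. N < p}"
definition Nq :: "nat \<Rightarrow> nat" where "Nq q = (LEAST N. 6 * gcnt q N < N)"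
definition sq :: "nat \<Rightarrow> nat" where "sq q = \<Prod>{p \<in> prime_factors q. p \<le> Nq q}"
definition rq :: "nat \<Rightarrow> nat" where "rq q = \<Prod>{p \<in> prime_factors q. Nq q < p}"

lemma Nq_prop: assumes "q > 0" shows "6 * gcnt q (Nq q) < Nq q"
proof -
  have "{p \<in> prime_factors q. q < p} = {}"
    using assms by (auto simp: in_prime_factors_iff dest: dvd_imp_le)
  hence "gcnt q q = 0" unfolding gcnt_def by (simp only: card.empty)
  hence "6 * gcnt q q < q" using assms by simp
  thus ?thesis unfolding Nq_def by (rule LeastI)
qed

lemma Nq_min: assumes "Nq q \<ge> 2" shows "6 * gcnt q (Nq q - 1) \<ge> Nq q - 1"
proof -
  have "Nq q - 1 < Nq q" using assms by simp
  hence "\<not> 6 * gcnt q (Nq q - 1) < Nq q - 1" unfolding Nq_def by (rule not_less_Least)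
  thus ?thesis by simp
qed

lemma prod_pf_sqfree: assumes "squarefree (q::nat)" shows "\<Prod>(prime_factors q) = q"
proof -
  have q0: "q \<noteq> 0" using assms not_squarefree_0 by metis
  have m: "\<forall>p\<in>prime_factors q. multiplicity p q = 1"
    using squarefree_factorial_semiring'[OF q0] assms by simp
  have "\<Prod>(prime_factors q) = (\<Prod>p\<in>prime_factors q. p ^ multiplicity p q)"
    by (rule prod.cong) (use m in auto)
  also have "\<dots> = q" using prod_prime_factors[OF q0] by simp
  finally show ?thesis .
qed

lemma sq_rq: assumes "squarefree (q::nat)"
  shows "q = sq q * rq q" "coprime (sq q) (rq q)" "sq q > 0" "rq q > 0"
proof -
  let ?S = "{p \<in> prime_factors q. p \<le> Nq q}" and ?R = "{p \<in> prime_factors q. Nq q < p}"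
  have un: "prime_factors q = ?S \<union> ?R" by auto
  have "q = \<Prod>(prime_factors q)" using prod_pf_sqfree[OF assms] by simp
  also have "\<dots> = \<Prod>?S * \<Prod>?R" by (subst un, rule prod.union_disjoint) auto
  finally show "q = sq q * rq q" unfolding sq_def rq_def .
  show "coprime (sq q) (rq q)" unfolding sq_def rq_def
  proof (intro prod_coprime_left prod_coprime_right)
    fix p p' assume "p \<in> ?S" "p' \<in> ?R"
    thus "coprime p p'" by (intro primes_coprime) (auto simp: in_prime_factors_iff)
  qed
  show "sq q > 0" "rq q > 0" unfolding sq_def rq_def
    by (auto intro!: prod_pos simp: in_prime_factors_iff prime_gt_0_nat)
qed


lemma inj_range:
  fixes n p :: int assumes "n \<le> p"
  shows "\<forall>a\<in>{0..<n}. \<forall>b\<in>{0..<n}. [a = b] (mod p) \<longrightarrow> a = b"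
proof (intro ballI impI)
  fix a b assume ab: "a \<in> {0..<n}" "b \<in> {0..<n}" "[a = b] (mod p)"
  have a: "0 \<le> a" "a < p" using ab(1) assms by simp_all
  have b: "0 \<le> b" "b < p" using ab(2) assms by simp_all
  show "a = b" by (rule cong_less_imp_eq_int[OF a b ab(3)])
qed

lemma cnt_lemma:
  fixes M :: "int^3^3" and p N :: nat
  assumes "prime p" "\<not>(\<forall>i. int p dvd Polynomial.coeff (Dp M) i)" "N \<le> p"
  shows "card {a \<in> {0..<int N}. int p dvd poly (Dp M) a} \<le> 6"
proof -
  have inj: "\<forall>a\<in>{0..<int N}. \<forall>b\<in>{0..<int N}. [a = b] (mod int p) \<longrightarrow> a = b"
    by (rule inj_range) (simp add: assms(3))
  have pp: "prime (int p)" using assms(1) by simp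
  have "card {a \<in> {0..<int N}. int p dvd poly (Dp M) a} \<le> degree (Dp M)"
    by (rule roots_mod_p[OF pp assms(2) _ inj]) simp
  also have "\<dots> \<le> 6" by (rule deg_Dp)
  finally show ?thesis .
qed


lemma alg_r:
  fixes \<alpha> \<beta> r d A B C :: int
  assumes "\<alpha> + \<beta> = 1" "\<beta> = r * d"
  shows "(\<alpha>*A+\<beta>)*(\<alpha>*C+\<beta>) - (\<alpha>*B)*(\<alpha>*B) - (A*C - B*B) = r*((r*d^2-2*d)*(A*C-B*B) + \<alpha>*d*(A+C) + r*d^2)"
proof -
  have a: "\<alpha> = 1 - r*d" using assms by simp
  show ?thesis unfolding a assms(2) by (simp add: algebra_simps eval_nat_numeral)
qed

lemma alg_s:
  fixes \<alpha> \<beta> s c A B C :: int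
  assumes "\<alpha> + \<beta> = 1" "\<alpha> = s * c"
  shows "(\<alpha>*A+\<beta>)*(\<alpha>*C+\<beta>) - (\<alpha>*B)*(\<alpha>*B) - 1 = s*(s*c^2*(A*C-B*B) + c*\<beta>*(A+C) + s*c^2 - 2*c)"
proof -
  have b: "\<beta> = 1 - s*c" using assms by simp
  show ?thesis unfolding b assms(2) by (simp add: algebra_simps eval_nat_numeral)
qed

lemma main_M:
  fixes M :: "int^3^3" and q :: nat
  assumes oq: "odd q" and sqf: "squarefree q" and sym: "transpose M = M" and cop: "coprime (det M) (int q)"
  shows "\<exists>M2::int^2^2. transpose M2 = M2 \<and> coprime (det M2) (int q) \<and>
           mhat M q \<le> 4 * real (sq q) * real (Nq q)^3 * mhat M2 q"
proof -
  have q0: "q > 0" using oq by (cases q) auto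
  define N where "N = Nq q"
  define R where "R = {p \<in> prime_factors q. N < p}"
  define s where "s = sq q"
  define r where "r = rq q"
  have qsr: "q = s * r" and cop_sr: "coprime s r" and s0: "s > 0" and r0: "r > 0"
    using sq_rq[OF sqf] unfolding s_def r_def by auto
  have finR: "finite R" unfolding R_def by simp
  have Nlt: "6 * card R < N" using Nq_prop[OF q0] unfolding N_def R_def gcnt_def by simp
  have N1: "N \<ge> 1" using Nlt by simp
  have Rp: "prime p" "p dvd q" "N < p" if "p \<in> R" for p
    using that q0 unfolding R_def by (auto simp: in_prime_factors_iff)
  have nz: "\<not>(\<forall>i. int p dvd Polynomial.coeff (Dp M) i)" if pR: "p \<in> R" for p
  proof
    assume all: "\<forall>i. int p dvd Polynomial.coeff (Dp M) i"
    have pp: "prime (int p)" using Rp[OF pR] by simp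
    have "int p dvd 2*M$1$1*Polynomial.coeff (Dp M) 0 + M$1$2*Polynomial.coeff (Dp M) 1 + M$1$3 * Polynomial.coeff (Dp M) 3"
      using all by (intro dvd_add dvd_mult) auto
    hence d2: "int p dvd 2 * det M" unfolding det_coeffs[OF sym] .
    have "\<not> int p dvd 2"
    proof
      assume "int p dvd 2"
      hence "int p dvd int 2" by simp
      hence "p dvd 2" by (simp only: int_dvd_int_iff)
      hence "p \<le> 2" by (rule dvd_imp_le) simp
      hence "p = 2" using prime_ge_2_nat[OF Rp(1)[OF pR]] by simp
      thus False using Rp(2)[OF pR] oq by simp
    qed
    hence "int p dvd det M" using d2 pp prime_dvd_mult_iff by blast
    moreover have "int p dvd int q" using Rp(2)[OF pR] by simp
    ultimately have "is_unit (int p)" by (rule coprime_common_divisor[OF cop])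
    thus False using pp not_prime_unit by blast
  qed
  define Bad where "Bad = (\<Union>p\<in>R. {a \<in> {0..<int N}. int p dvd poly (Dp M) a})"
  have cnt: "card {a \<in> {0..<int N}. int p dvd poly (Dp M) a} \<le> 6" if pR: "p \<in> R" for p
    using Rp(3)[OF pR] by (intro cnt_lemma[OF Rp(1)[OF pR] nz[OF pR]]) simp
  have "card Bad \<le> (\<Sum>p\<in>R. card {a \<in> {0..<int N}. int p dvd poly (Dp M) a})"
    unfolding Bad_def by (rule card_UN_le[OF finR])
  also have "\<dots> \<le> card R * 6" using sum_bounded_above[of R "\<lambda>p. card {a \<in> {0..<int N}. int p dvd poly (Dp M) a}" 6] cnt by simp
  finally have cB: "card Bad < N" using Nlt by simp
  have "\<not> {0..<int N} \<subseteq> Bad"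
  proof
    assume "{0..<int N} \<subseteq> Bad"
    moreover have "Bad \<subseteq> {0..<int N}" unfolding Bad_def by blast
    hence "finite Bad" by (rule finite_subset) simp
    ultimately have "card {0..<int N} \<le> card Bad" by (intro card_mono)
    thus False using cB by simp
  qed
  then obtain a where aN: "a \<in> {0..<int N}" and aB: "a \<notin> Bad" by blast
  have good: "\<not> int p dvd poly (Dp M) a" if "p \<in> R" for p using aN aB that unfolding Bad_def by blast
  define M2 where "M2 = M2of M a"
  have dM2: "det M2 = poly (Dp M) a" unfolding M2_def by (rule det_M2[OF sym])
  have copr: "coprime (det M2) (int r)"
  proof -
    have "int r = (\<Prod>p\<in>R. int p)" unfolding r_def rq_def R_def N_def by (simp add: of_nat_prod)
    moreover have "coprime (det M2) (\<Prod>p\<in>R. int p)"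
    proof (rule prod_coprime_right)
      fix p assume pR: "p \<in> R"
      have "coprime (int p) (det M2)" using Rp(1)[OF pR] good[OF pR] dM2
        by (intro prime_imp_coprime) auto
      thus "coprime (det M2) (int p)" by (simp add: coprime_commute)
    qed
    ultimately show ?thesis by simp
  qed
  have "coprime (int s) (int r)" using cop_sr by simp
  hence "gcd (int s) (int r) = 1" by simp
  hence "\<exists>u v. u * int s + v * int r = 1" using bezout_int[of "int s" "int r"] by simp
  then obtain c d :: int where bez: "c * int s + d * int r = 1" by blast
  define \<alpha> where "\<alpha> = int s * c"
  define \<beta> where "\<beta> = int r * d"
  have ab1: "\<alpha> + \<beta> = 1" using bez unfolding \<alpha>_def \<beta>_def by (simp add: mult.commute)
  define Mf :: "int^2^2" where "Mf = (\<chi> i j. \<alpha> * M2$i$j + \<beta> * (if i = j then 1 else 0))"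
  have symM2: "M2$2$1 = M2$1$2" by (simp add: M2_def M2of_def)
  have symMf: "transpose Mf = Mf" unfolding transpose_def Mf_def
    by (auto simp: vec_eq_iff forall_2 symM2)
  have dMf: "det Mf = (\<alpha>*M2$1$1+\<beta>)*(\<alpha>*M2$2$2+\<beta>) - (\<alpha>*M2$1$2)*(\<alpha>*M2$1$2)"
    by (simp add: det_2 Mf_def symM2)
  have dM2': "det M2 = M2$1$1*M2$2$2 - M2$1$2*M2$1$2" by (simp add: det_2 symM2)
  have c1: "[det Mf = det M2] (mod int r)"
    unfolding cong_iff_dvd_diff dMf dM2' alg_r[OF ab1 \<beta>_def] by simp
  have c2: "[det Mf = 1] (mod int s)"
    unfolding cong_iff_dvd_diff dMf alg_s[OF ab1 \<alpha>_def] by simp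
  have "coprime (det Mf) (int r)" using cong_imp_coprime[OF cong_sym[OF c1] copr] .
  moreover have "coprime (det Mf) (int s)" using cong_imp_coprime[OF cong_sym[OF c2]] by simp
  ultimately have copMf: "coprime (det Mf) (int q)" unfolding qsr by simp
  define K where "K = 4 * real s * real N ^ 3"
  have Kpos: "K > 0" unfolding K_def using s0 N1 by simp
  have key: "mhat M q \<le> K * enorm y" if y0: "y \<noteq> 0" and yt: "[qform Mf y = t^2] (mod int q)" for y t
  proof -
    have qf: "qform Mf y = \<alpha> * qform M2 y + \<beta> * (y$1^2 + y$2^2)"
      by (simp add: qform_def sum_2 Mf_def algebra_simps power2_eq_square symM2)
    have "qform Mf y - qform M2 y = int r * (d * (y$1^2 + y$2^2) - d * qform M2 y)"
    proof -
      have a1: "\<alpha> = 1 - int r * d" using ab1 unfolding \<beta>_def by simp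
      show ?thesis unfolding qf a1 \<beta>_def by (simp add: algebra_simps)
    qed
    hence c3: "[qform Mf y = qform M2 y] (mod int r)" unfolding cong_iff_dvd_diff by simp
    have "[qform Mf y = t^2] (mod int r)" using cong_dvd_modulus[OF yt] qsr by simp
    hence "[qform M2 y = t^2] (mod int r)" using cong_trans[OF cong_sym[OF c3]] by blast
    then obtain k where k: "qform M2 y - t^2 = int r * k" unfolding cong_iff_dvd_diff by (auto elim: dvdE)
    define x where "x = xvec (int s) a y"
    have qx: "qform M x = (int s)^2 * qform M2 y" unfolding x_def M2_def by (rule qform_x[OF sym])
    have "qform M x - (int s * t)^2 = (int s)^2 * (qform M2 y - t^2)"
      unfolding qx by (simp add: algebra_simps power2_eq_square)
    also have "\<dots> = int q * (int s * k)" unfolding k qsr by (simp add: algebra_simps power2_eq_square)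
    finally have "qform M x - (int s * t)^2 = int q * (int s * k)" .
    hence xt: "[qform M x = (int s * t)^2] (mod int q)" unfolding cong_iff_dvd_diff by simp
    have x2: "x$2 = - int s * y$1" and x3: "x$3 = - int s * y$2" and x1: "x$1 = int s * (y$1 * a + y$2 * a^3)"
      unfolding x_def xvec_def by simp_all
    have "y$1 \<noteq> 0 \<or> y$2 \<noteq> 0" using y0 by (auto simp: vec_eq_iff forall_2)
    hence x0: "x \<noteq> 0" using x2 x3 s0 by auto
    have "enorm x \<in> {enorm x | x::int^3. x \<noteq> 0 \<and> (\<exists>t::int. [qform M x = t^2] (mod int q))}"
      using x0 xt by blast
    hence m1: "mhat M q \<le> enorm x" unfolding mhat_def
      by (rule cInf_lower) (rule bdd_belowI[of _ 0], auto simp: enorm_nonneg)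
    define Y where "Y = enorm y"
    define y1 y2 where "y1 = real_of_int (y$1)" and "y2 = real_of_int (y$2)"
    have Y: "Y = sqrt (y1^2 + y2^2)" unfolding Y_def enorm_def y1_def y2_def by (simp add: sum_2)
    have Y1: "\<bar>y1\<bar> \<le> Y" unfolding Y using real_sqrt_le_mono[of "y1^2" "y1^2+y2^2"] by simp
    have Y2: "\<bar>y2\<bar> \<le> Y" unfolding Y using real_sqrt_le_mono[of "y2^2" "y1^2+y2^2"] by simp
    define ra where "ra = real_of_int a"
    define W where "W = real N ^ 3"
    have ra: "0 \<le> ra" "ra \<le> real N" using aN unfolding ra_def by auto
    have W1: "1 \<le> W" unfolding W_def using N1 by simp
    have "real N \<le> real N ^ 3" using N1 by (intro self_le_power) auto
    hence raW: "ra \<le> W" unfolding W_def using ra by linarith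
    have ra3: "ra^3 \<le> W" unfolding W_def using ra by (intro power_mono) auto
    define S where "S = real s"
    have S0: "S > 0" unfolding S_def using s0 by simp
    have "\<bar>y1 * ra + y2 * ra^3\<bar> \<le> \<bar>y1\<bar> * ra + \<bar>y2\<bar> * ra^3"
      using ra by (simp add: abs_mult order_trans[OF abs_triangle_ineq])
    also have "\<dots> \<le> Y * W + Y * W" using Y1 Y2 raW ra3 ra
      by (intro add_mono mult_mono) auto
    finally have b0: "\<bar>y1 * ra + y2 * ra^3\<bar> \<le> 2 * W * Y" by simp
    have "real_of_int (x$1) = S * (y1 * ra + y2 * ra^3)" unfolding x1 S_def y1_def y2_def ra_def by simp
    hence "\<bar>real_of_int (x$1)\<bar> = S * \<bar>y1 * ra + y2 * ra^3\<bar>" using S0 by (simp add: abs_mult)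
    also have "\<dots> \<le> S * (2 * W * Y)" using b0 S0 by (intro mult_left_mono) auto
    finally have b1: "\<bar>real_of_int (x$1)\<bar> \<le> 2 * S * W * Y" by (simp add: algebra_simps)
    have Y0: "Y \<ge> 0" unfolding Y_def by (rule enorm_nonneg)
    have YW: "Y \<le> 2 * W * Y" using mult_right_mono[of 1 "2*W" Y] W1 Y0 by simp
    have b2: "\<bar>real_of_int (x$2)\<bar> \<le> 2 * S * W * Y"
    proof -
      have "\<bar>real_of_int (x$2)\<bar> = S * \<bar>y1\<bar>" unfolding x2 S_def y1_def by (simp add: abs_mult)
      also have "\<dots> \<le> S * (2 * W * Y)" using Y1 W1 S0 using YW by (intro mult_left_mono) auto
      finally show ?thesis by (simp add: algebra_simps)
    qed
    have b3: "\<bar>real_of_int (x$3)\<bar> \<le> 2 * S * W * Y"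
    proof -
      have "\<bar>real_of_int (x$3)\<bar> = S * \<bar>y2\<bar>" unfolding x3 S_def y2_def by (simp add: abs_mult)
      also have "\<dots> \<le> S * (2 * W * Y)" using Y2 W1 S0 using YW by (intro mult_left_mono) auto
      finally show ?thesis by (simp add: algebra_simps)
    qed
    have sqb: "(real_of_int (x$i))^2 \<le> (2 * S * W * Y)^2" if "\<bar>real_of_int (x$i)\<bar> \<le> 2 * S * W * Y" for i
    proof -
      have "\<bar>real_of_int (x$i)\<bar>^2 \<le> (2 * S * W * Y)^2" using that by (intro power_mono) auto
      thus ?thesis by simp
    qed
    have "enorm x = sqrt ((real_of_int (x$1))^2 + (real_of_int (x$2))^2 + (real_of_int (x$3))^2)"
      unfolding enorm_def by (simp add: sum_3)
    also have "\<dots> \<le> 4 * S * W * Y"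
    proof (rule real_le_lsqrt)
      show "0 \<le> 4 * S * W * Y" using S0 W1 enorm_nonneg[of y] unfolding Y_def by simp
      have "(real_of_int (x$1))^2 + (real_of_int (x$2))^2 + (real_of_int (x$3))^2 \<le> 3 * (2 * S * W * Y)^2"
        using sqb[OF b1] sqb[OF b2] sqb[OF b3] by simp
      also have "\<dots> \<le> (4 * S * W * Y)^2" by (simp add: power_mult_distrib)
      finally show "(real_of_int (x$1))^2 + (real_of_int (x$2))^2 + (real_of_int (x$3))^2 \<le> (4 * S * W * Y)^2" .
    qed
    also have "\<dots> = K * enorm y" unfolding K_def S_def W_def Y_def by simp
    finally show ?thesis using m1 by simp
  qed
  have "mhat M q / K \<le> mhat Mf q" unfolding mhat_def[of Mf]
  proof (rule cInf_greatest)
    show "{enorm x | x::int^2. x \<noteq> 0 \<and> (\<exists>t::int. [qform Mf x = t^2] (mod int q))} \<noteq> {}"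
      by (rule mhat_facts(1)[OF q0])
    fix z assume "z \<in> {enorm x | x::int^2. x \<noteq> 0 \<and> (\<exists>t::int. [qform Mf x = t^2] (mod int q))}"
    then obtain y t where "z = enorm y" "y \<noteq> 0" "[qform Mf y = t^2] (mod int q)" by blast
    thus "mhat M q / K \<le> z" using key[of y t] Kpos by (simp add: divide_le_eq mult.commute)
  qed
  hence "mhat M q \<le> K * mhat Mf q" using Kpos by (simp add: divide_le_eq mult.commute)
  thus ?thesis using symMf copMf unfolding K_def s_def N_def by blast
qed


lemma K_bound:
  fixes C :: real and q :: nat and \<epsilon> :: real
  assumes e: "\<epsilon> > 0" and C: "C > 0" "\<forall>n::nat. n \<ge> 2 \<longrightarrow> 4 * 4^n * real n ^ 3 \<le> C * real n powr (\<epsilon>*(real n - 1)/6)"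
    and oq: "odd q" and sqf: "squarefree q"
  shows "4 * real (sq q) * real (Nq q)^3 \<le> (C + 4) * real q powr \<epsilon>"
proof -
  have q0: "q > 0" using oq by (cases q) auto
  define N where "N = Nq q"
  have N1: "N \<ge> 1" using Nq_prop[OF q0] unfolding N_def by simp
  have qe: "real q powr \<epsilon> \<ge> 1" using q0 e by (intro ge_one_powr_ge_zero) auto
  show ?thesis
  proof (cases "N = 1")
    case True
    have "{p \<in> prime_factors q. p \<le> Nq q} = {}"
      using True unfolding N_def by (auto simp: in_prime_factors_iff dest: prime_ge_2_nat)
    hence "sq q = 1" unfolding sq_def by (simp only: prod.empty)
    hence "4 * real (sq q) * real (Nq q)^3 = 4" using True unfolding N_def by simp
    also have "\<dots> \<le> (C + 4) * 1" using C by simp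
    also have "\<dots> \<le> (C + 4) * real q powr \<epsilon>" using qe C by (intro mult_left_mono) auto
    finally show ?thesis .
  next
    case False
    hence N2: "N \<ge> 2" using N1 by simp
    have "sq q dvd \<Prod>{p. prime p \<and> p \<le> N}" unfolding sq_def N_def
      by (rule prod_dvd_prod_subset) (auto simp: in_prime_factors_iff)
    hence "sq q \<le> \<Prod>{p. prime p \<and> p \<le> N}"
      by (rule dvd_imp_le) (auto intro!: prod_pos simp: prime_gt_0_nat)
    also have "\<dots> \<le> 4^N" by (rule primorial_le)
    finally have "real (sq q) \<le> 4^N" by (metis of_nat_le_iff of_nat_numeral of_nat_power)
    hence "4 * real (sq q) * real N^3 \<le> 4 * 4^N * real N^3" by (intro mult_right_mono) auto
    also have "\<dots> \<le> C * real N powr (\<epsilon>*(real N - 1)/6)" using C(2) N2 by blast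
    also have "real N powr (\<epsilon>*(real N - 1)/6) \<le> real q powr \<epsilon>"
    proof -
      define T where "T = {p \<in> prime_factors q. N - 1 < p}"
      define g where "g = card T"
      have g6: "6 * g \<ge> N - 1" using Nq_min[of q] N2 unfolding g_def T_def gcnt_def N_def by simp
      have "\<Prod>T dvd \<Prod>(prime_factors q)" unfolding T_def by (rule prod_dvd_prod_subset) auto
      hence "\<Prod>T dvd q" using prod_pf_sqfree[OF sqf] by simp
      hence Tq: "\<Prod>T \<le> q" using q0 by (rule dvd_imp_le)
      have "(\<Prod>p\<in>T. N) \<le> (\<Prod>p\<in>T. p)" by (rule prod_mono) (auto simp: T_def)
      hence "N ^ g \<le> q" using Tq unfolding g_def by simp
      hence Ng: "real N ^ g \<le> real q" by (metis of_nat_le_iff of_nat_power)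
      have "\<epsilon>*(real N - 1)/6 \<le> real g * \<epsilon>" using g6 e N2
      proof -
        have "real N - 1 \<le> 6 * real g" using g6 N2 by linarith
        hence "\<epsilon> * (real N - 1) \<le> \<epsilon> * (6 * real g)" using e by (intro mult_left_mono) auto
        thus ?thesis by (simp add: algebra_simps)
      qed
      hence "real N powr (\<epsilon>*(real N - 1)/6) \<le> real N powr (real g * \<epsilon>)"
        using N1 by (intro powr_mono) auto
      also have "\<dots> = (real N powr real g) powr \<epsilon>" by (simp add: powr_powr)
      also have "\<dots> = (real N ^ g) powr \<epsilon>" using N1 by (simp add: powr_realpow)
      also have "\<dots> \<le> real q powr \<epsilon>" using Ng e by (intro powr_mono2) auto
      finally show ?thesis .
    qed
    hence "C * real N powr (\<epsilon>*(real N - 1)/6) \<le> C * real q powr \<epsilon>" using C by (intro mult_left_mono) auto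
    also have "\<dots> \<le> (C + 4) * real q powr \<epsilon>" using qe by (intro mult_right_mono) auto
    finally show ?thesis unfolding N_def .
  qed
qed

lemma Bhat_bound:
  fixes q :: nat assumes oq: "odd q" and sqf: "squarefree q"
  shows "Bhat TYPE(3) q \<le> 4 * real (sq q) * real (Nq q)^3 * Bhat TYPE(2) q"
    and "Bhat TYPE(2) q \<ge> 0"
proof -
  have q0: "q > 0" using oq by (cases q) auto
  define K where "K = 4 * real (sq q) * real (Nq q)^3"
  have K0: "K \<ge> 0" unfolding K_def by simp
  define S2 where "S2 = {mhat (M::int^2^2) q | M. transpose M = M \<and> coprime (det M) (int q)}"
  define S3 where "S3 = {mhat (M::int^3^3) q | M. transpose M = M \<and> coprime (det M) (int q)}"
  have B2: "Bhat TYPE(2) q = Sup S2" unfolding Bhat_def S2_def ..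
  have B3: "Bhat TYPE(3) q = Sup S3" unfolding Bhat_def S3_def ..
  have bdd2: "bdd_above S2" unfolding S2_def
    by (rule bdd_aboveI[of _ "real q"]) (auto intro: mhat_facts(2)[OF q0])
  have i2: "mhat (mat 1 :: int^2^2) q \<in> S2" unfolding S2_def by auto
  have i3: "mhat (mat 1 :: int^3^3) q \<in> S3" unfolding S3_def by auto
  have "0 \<le> mhat (mat 1 :: int^2^2) q" by (rule mhat_facts(3)[OF q0])
  also have "\<dots> \<le> Sup S2" by (rule cSup_upper[OF i2 bdd2])
  finally show "Bhat TYPE(2) q \<ge> 0" unfolding B2 .
  have "Sup S3 \<le> K * Sup S2"
  proof (rule cSup_least)
    show "S3 \<noteq> {}" using i3 by blast
    fix z assume "z \<in> S3"
    then obtain M :: "int^3^3" where z: "z = mhat M q" "transpose M = M" "coprime (det M) (int q)"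
      unfolding S3_def by blast
    obtain M2 :: "int^2^2" where M2: "transpose M2 = M2" "coprime (det M2) (int q)" "mhat M q \<le> K * mhat M2 q"
      using main_M[OF oq sqf z(2) z(3)] unfolding K_def by blast
    have "mhat M2 q \<in> S2" unfolding S2_def using M2 by blast
    hence "mhat M2 q \<le> Sup S2" by (rule cSup_upper[OF _ bdd2])
    hence "K * mhat M2 q \<le> K * Sup S2" using K0 by (rule mult_left_mono)
    thus "z \<le> K * Sup S2" using z M2 by simp
  qed
  thus "Bhat TYPE(3) q \<le> 4 * real (sq q) * real (Nq q)^3 * Bhat TYPE(2) q" unfolding B2 B3 K_def .
qed

theorem lemma4:
  fixes \<epsilon> :: real
  assumes "\<epsilon> > 0"
  shows "\<exists>C>0. \<forall>q::nat. odd q \<and> squarefree q \<longrightarrow>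
           Bhat TYPE(3) q \<le> C * (real q) powr \<epsilon> * Bhat TYPE(2) q"
proof -
  obtain C where C: "C > 0" "\<forall>n::nat. n \<ge> 2 \<longrightarrow> 4 * 4^n * real n ^ 3 \<le> C * real n powr (\<epsilon>*(real n - 1)/6)"
    using asym_bound[OF assms] by blast
  show ?thesis
  proof (intro exI[of _ "C + 4"] conjI allI impI)
    show "C + 4 > 0" using C by simp
    fix q :: nat assume q: "odd q \<and> squarefree q"
    have "Bhat TYPE(3) q \<le> 4 * real (sq q) * real (Nq q)^3 * Bhat TYPE(2) q"
      using q by (intro Bhat_bound(1)) auto
    also have "\<dots> \<le> (C + 4) * real q powr \<epsilon> * Bhat TYPE(2) q"
      using K_bound[OF assms C] q Bhat_bound(2)[of q] by (intro mult_right_mono) auto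
    finally show "Bhat TYPE(3) q \<le> (C + 4) * real q powr \<epsilon> * Bhat TYPE(2) q" .
  qed
qed

end
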